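(* Let $\alpha,\beta\in\mathbb{C}$ be not both zero, $\ell(x,y)=\alpha x+\beta y$, $H(x,y)=\tfrac12 a_1x^2+a_2xy+\tfrac12 a_3y^2+a_4x+a_5y$, and let $\Phi_f$ be the Kahan map (step $1$) of the vector field $f=\ell\,(\partial H/\partial y,\,-\partial H/\partial x)^T$. Let $\gamma_1=a_2^2-a_1a_3$, $c=\gamma_1^{-1/2}$, $\gamma_2=a_3a_4^2+a_1a_5^2-2a_2a_4a_5$, $C=H-\tfrac12\gamma_2\ell^2$, $D=1-\gamma_1\ell^2$, and consider the pencil of conics $C(x,y)-\lambda D(x,y)=0$, with $C(x,y)=0$ nonsingular. Then, generically, the map $\Phi_f$, considered as a birational map $\mathbb{C}P^2\dashrightarrow\mathbb{C}P^2$, has three singular points $B_1,B_3,B_0$, lying on the lines $\ell(x,y)=-c$, $\ell(x,y)=c$ and $\ell(x,y)=0$ respectively; and $\Phi_f^{-1}$ has three singular points $B_2,B_4,B_5$, lying on the lines $\ell(x,y)=-c$, $\ell(x,y)=c$ and $\ell(x,y)=0$ respectively. The points $B_1,B_2,B_3,B_4$ are the base points of the pencil, and $$B_0=\tfrac12(B_2+B_4),\qquad B_5=\tfrac12(B_1+B_3).$$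
   Context: Kahan discretization: for a quadratic vector field $f(x)=Q(x)+Bx+c$ on $\mathbb{C}^n$, the Kahan map $\widetilde x=\Phi_f(x)$ (step $1$) is defined by $\frac{\widetilde x-x}{2}=Q(x,\widetilde x)+\frac12B(x+\widetilde x)+c$ with $Q(x,\widetilde x)=\frac12(Q(x+\widetilde x)-Q(x)-Q(\widetilde x))$; equivalently $\Phi_f(x)=x+2(I-f'(x))^{-1}f(x)$. It is birational with $\Phi_f^{-1}=\Phi_{-f}$. In the planar case $\Phi_f=(R/T,S/T)$ with polynomials $R,S,T$ of degree 2; singular points of the birational map are its points of indeterminacy, i.e. the common zeros of the components of its homogenized representation (in the affine part, the common zeros of $R,S,T$). Base points of a pencil of conics are the points common to all its conics. *)

theory Defs
  imports Complex_Main
begin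

type_synonym lin2 = "complex \<times> complex \<times> complex"
type_synonym quad2 = "complex \<times> complex \<times> complex \<times> complex \<times> complex \<times> complex"

fun lin_eval :: "lin2 \<Rightarrow> complex \<Rightarrow> complex \<Rightarrow> complex" where
  "lin_eval (p, q, r) x y = p * x + q * y + r"

fun quad_eval :: "quad2 \<Rightarrow> complex \<Rightarrow> complex \<Rightarrow> complex" where
  "quad_eval (A, B, C, D, E, F) x y = A * x^2 + B * x * y + C * y^2 + D * x + E * y + F"

fun quad_hom :: "quad2 \<Rightarrow> complex \<Rightarrow> complex \<Rightarrow> complex \<Rightarrow> complex" where
  "quad_hom (A, B, C, D, E, F) x y z =
     A * x^2 + B * x * y + C * y^2 + D * x * z + E * y * z + F * z^2"

fun lin_mul :: "lin2 \<Rightarrow> lin2 \<Rightarrow> quad2" where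
  "lin_mul (p, q, r) (u, v, w) = (p * u, p * v + q * u, q * v, p * w + r * u, q * w + r * v, r * w)"

fun quad_add :: "quad2 \<Rightarrow> quad2 \<Rightarrow> quad2" where
  "quad_add (A, B, C, D, E, F) (A', B', C', D', E', F') =
     (A + A', B + B', C + C', D + D', E + E', F + F')"

fun quad_scale :: "complex \<Rightarrow> quad2 \<Rightarrow> quad2" where
  "quad_scale k (A, B, C, D, E, F) = (k * A, k * B, k * C, k * D, k * E, k * F)"

definition quad_const :: "complex \<Rightarrow> quad2" where
  "quad_const k = (0, 0, 0, 0, 0, k)"

fun quad_dx :: "quad2 \<Rightarrow> lin2" where
  "quad_dx (A, B, C, D, E, F) = (2 * A, B, D)"

fun quad_dy :: "quad2 \<Rightarrow> lin2" where
  "quad_dy (A, B, C, D, E, F) = (B, 2 * C, E)"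

text \<open>A conic \<open>Q(x,y) = 0\<close> is nonsingular if its projective closure has no singular point,
  i.e. no point of \<open>\<complex>P^2\<close> at which all partial derivatives of the homogenized equation
  vanish.\<close>
fun conic_nonsingular :: "quad2 \<Rightarrow> bool" where
  "conic_nonsingular (A, B, C, D, E, F) \<longleftrightarrow>
     \<not> (\<exists>x y z. (x, y, z) \<noteq> (0, 0, 0) \<and>
            2 * A * x + B * y + D * z = 0 \<and>
            B * x + 2 * C * y + E * z = 0 \<and>
            D * x + E * y + 2 * F * z = 0)"

text \<open>A quadratic vector field \<open>f = (f1, f2)\<close> on \<open>\<complex>^2\<close>, each component of degree \<le> 2.
  Writing \<open>f(x) = Q(x) + Bx + c\<close>, the Kahan equation
  \<open>(x' - x)/2 = Q(x,x') + B(x+x')/2 + c\<close> is equivalent to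
  \<open>(I - f'(x)) x' = (I + B) x + 2 c\<close>, so \<open>\<Phi>_f = (R/T, S/T)\<close> with
  \<open>T = det (I - f'(x))\<close>, \<open>(R, S) = adj (I - f'(x)) ((I + B) x + 2 c)\<close>
  (equivalently \<open>\<Phi>_f(x) = x + 2 (I - f'(x))^{-1} f(x)\<close>).
  Below are the homogenized components \<open>(R^h, S^h, T^h)\<close> (homogeneous of degree 2 in
  \<open>(x, y, z)\<close>; setting \<open>z = 1\<close> recovers \<open>R, S, T\<close>).\<close>

type_synonym qvf2 = "quad2 \<times> quad2"

fun kahan_hom :: "qvf2 \<Rightarrow> complex \<Rightarrow> complex \<Rightarrow> complex \<Rightarrow> complex \<times> complex \<times> complex" where
  "kahan_hom ((A1, B1, C1, D1, E1, F1), (A2, B2, C2, D2, E2, F2)) x y z =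
    (let m11 = z - (2 * A1 * x + B1 * y + D1 * z);
         m12 = - (B1 * x + 2 * C1 * y + E1 * z);
         m21 = - (2 * A2 * x + B2 * y + D2 * z);
         m22 = z - (B2 * x + 2 * C2 * y + E2 * z);
         v1 = x + D1 * x + E1 * y + 2 * F1 * z;
         v2 = y + D2 * x + E2 * y + 2 * F2 * z
     in (m22 * v1 - m12 * v2, m11 * v2 - m21 * v1, m11 * m22 - m12 * m21))"

definition kahan_map :: "qvf2 \<Rightarrow> complex \<times> complex \<Rightarrow> complex \<times> complex" where
  "kahan_map f p = (case kahan_hom f (fst p) (snd p) 1 of (R, S, T) \<Rightarrow> (R / T, S / T))"

fun qvf_neg :: "qvf2 \<Rightarrow> qvf2" where
  "qvf_neg (f1, f2) = (quad_scale (-1) f1, quad_scale (-1) f2)"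

text \<open>Points of \<open>\<complex>P^2\<close> are represented by the
  nonzero vectors of \<open>\<complex>^3\<close> (the set below is a union of punctured lines through 0).\<close>
definition kahan_sing :: "qvf2 \<Rightarrow> (complex \<times> complex \<times> complex) set" where
  "kahan_sing f = {(x, y, z). (x, y, z) \<noteq> (0, 0, 0) \<and> kahan_hom f x y z = (0, 0, 0)}"

text \<open>Singular points of \<open>\<Phi>_f^{-1} = \<Phi>_{-f}\<close>.\<close>
definition kahan_inv_sing :: "qvf2 \<Rightarrow> (complex \<times> complex \<times> complex) set" where
  "kahan_inv_sing f = kahan_sing (qvf_neg f)"

definition proj_pt :: "complex \<times> complex \<Rightarrow> (complex \<times> complex \<times> complex) set" where
  "proj_pt p = {(t * fst p, t * snd p, t) | t. t \<noteq> 0}"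

definition pencil_base :: "quad2 \<Rightarrow> quad2 \<Rightarrow> (complex \<times> complex \<times> complex) set" where
  "pencil_base C D = {(x, y, z). (x, y, z) \<noteq> (0, 0, 0) \<and>
      (\<forall>lam. quad_hom C x y z - lam * quad_hom D x y z = 0)}"

inductive polyfun :: "nat \<Rightarrow> ((nat \<Rightarrow> complex) \<Rightarrow> complex) \<Rightarrow> bool" for n where
  pf_const: "polyfun n (\<lambda>v. k)"
| pf_var: "i < n \<Longrightarrow> polyfun n (\<lambda>v. v i)"
| pf_add: "polyfun n p \<Longrightarrow> polyfun n q \<Longrightarrow> polyfun n (\<lambda>v. p v + q v)"
| pf_mult: "polyfun n p \<Longrightarrow> polyfun n q \<Longrightarrow> polyfun n (\<lambda>v. p v * q v)"

definition holds_generically :: "nat \<Rightarrow> ((nat \<Rightarrow> complex) \<Rightarrow> bool) \<Rightarrow> bool" where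
  "holds_generically n P \<longleftrightarrow>
     (\<exists>g. polyfun n g \<and> (\<exists>v. g v \<noteq> 0) \<and> (\<forall>v. g v \<noteq> 0 \<longrightarrow> P v))"

definition ell :: "complex \<Rightarrow> complex \<Rightarrow> lin2" where
  "ell \<alpha> \<beta> = (\<alpha>, \<beta>, 0)"

definition Hfun :: "complex \<Rightarrow> complex \<Rightarrow> complex \<Rightarrow> complex \<Rightarrow> complex \<Rightarrow> quad2" where
  "Hfun a1 a2 a3 a4 a5 = (a1 / 2, a2, a3 / 2, a4, a5, 0)"

definition fvf :: "complex \<Rightarrow> complex \<Rightarrow> complex \<Rightarrow> complex \<Rightarrow> complex \<Rightarrow> complex \<Rightarrow> complex \<Rightarrow> qvf2" where
  "fvf \<alpha> \<beta> a1 a2 a3 a4 a5 =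
     (lin_mul (ell \<alpha> \<beta>) (quad_dy (Hfun a1 a2 a3 a4 a5)),
      quad_scale (-1) (lin_mul (ell \<alpha> \<beta>) (quad_dx (Hfun a1 a2 a3 a4 a5))))"

definition gamma1 :: "complex \<Rightarrow> complex \<Rightarrow> complex \<Rightarrow> complex" where
  "gamma1 a1 a2 a3 = a2^2 - a1 * a3"

definition gamma2 :: "complex \<Rightarrow> complex \<Rightarrow> complex \<Rightarrow> complex \<Rightarrow> complex \<Rightarrow> complex" where
  "gamma2 a1 a2 a3 a4 a5 = a3 * a4^2 + a1 * a5^2 - 2 * a2 * a4 * a5"

definition Cconic :: "complex \<Rightarrow> complex \<Rightarrow> complex \<Rightarrow> complex \<Rightarrow> complex \<Rightarrow> complex \<Rightarrow> complex \<Rightarrow> quad2" where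
  "Cconic \<alpha> \<beta> a1 a2 a3 a4 a5 =
     quad_add (Hfun a1 a2 a3 a4 a5)
              (quad_scale (- gamma2 a1 a2 a3 a4 a5 / 2) (lin_mul (ell \<alpha> \<beta>) (ell \<alpha> \<beta>)))"

definition Dconic :: "complex \<Rightarrow> complex \<Rightarrow> complex \<Rightarrow> complex \<Rightarrow> complex \<Rightarrow> quad2" where
  "Dconic \<alpha> \<beta> a1 a2 a3 =
     quad_add (quad_const 1) (quad_scale (- gamma1 a1 a2 a3) (lin_mul (ell \<alpha> \<beta>) (ell \<alpha> \<beta>)))"

definition midpt :: "complex \<times> complex \<Rightarrow> complex \<times> complex \<Rightarrow> complex \<times> complex" where
  "midpt p q = ((fst p + fst q) / 2, (snd p + snd q) / 2)"

end

theory Submission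
  imports Defs
begin

definition D0 :: "complex \<Rightarrow> complex \<Rightarrow> complex \<Rightarrow> complex \<Rightarrow> complex \<Rightarrow> complex" where
  "D0 \<alpha> \<beta> a1 a2 a3 = \<alpha>^2*a3 - 2*\<alpha>*\<beta>*a2 + \<beta>^2*a1"

definition Dl :: "complex \<Rightarrow> complex \<Rightarrow> complex \<Rightarrow> complex \<Rightarrow> complex \<Rightarrow> complex \<Rightarrow> complex" where
  "Dl \<alpha> \<beta> a1 a2 a3 s = \<alpha>*a3 - \<beta>*(a2 + s*gamma1 a1 a2 a3)"

definition ee :: "complex \<Rightarrow> complex \<Rightarrow> complex \<Rightarrow> complex \<Rightarrow> complex \<Rightarrow> complex" where
  "ee a2 a3 a4 a5 s = (1 + s*a2)*a5 - s*a3*a4"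

definition P0 :: "complex \<Rightarrow> complex \<Rightarrow> complex \<Rightarrow> complex \<Rightarrow> complex \<Rightarrow> complex \<Rightarrow> complex \<Rightarrow> complex \<times> complex" where
  "P0 \<alpha> \<beta> a1 a2 a3 a4 a5 =
     (- \<beta>*(1 - \<alpha>*a5 + \<beta>*a4) / D0 \<alpha> \<beta> a1 a2 a3, \<alpha>*(1 - \<alpha>*a5 + \<beta>*a4) / D0 \<alpha> \<beta> a1 a2 a3)"

definition Qp :: "complex \<Rightarrow> complex \<Rightarrow> complex \<Rightarrow> complex \<Rightarrow> complex \<Rightarrow> complex \<Rightarrow> complex \<Rightarrow> complex \<Rightarrow> complex \<Rightarrow> complex \<times> complex" where
  "Qp \<alpha> \<beta> a1 a2 a3 a4 a5 s s' =
     ((s*a3 + \<beta>*ee a2 a3 a4 a5 s') / Dl \<alpha> \<beta> a1 a2 a3 s',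
      - (\<alpha>*ee a2 a3 a4 a5 s' + s*(a2 + s'*gamma1 a1 a2 a3)) / Dl \<alpha> \<beta> a1 a2 a3 s')"

lemma kh:
  fixes \<alpha> \<beta> a1 a2 a3 a4 a5 x y z :: complex
  shows "kahan_hom (fvf \<alpha> \<beta> a1 a2 a3 a4 a5) x y z =
    (let l = \<alpha>*x + \<beta>*y; hx = a1*x + a2*y + a4*z; hy = a2*x + a3*y + a5*z; k = \<alpha>*hy - \<beta>*hx in
    ((z - k + l*a2 + \<alpha>*hy)*(x + a5*l) + (l*a3 + \<beta>*hy)*(y - a4*l),
     (- l*a1 - \<alpha>*hx)*(x + a5*l) + (z - k - l*a2 - \<beta>*hx)*(y - a4*l),
     z^2 - gamma1 a1 a2 a3 * l^2 - z*k - l*(\<alpha>*(a2*hy - a3*hx) + \<beta>*(a2*hx - a1*hy))))"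
  unfolding fvf_def ell_def Hfun_def gamma1_def
  by (simp add: Let_def; intro conjI; algebra)

lemma qh_scale: "quad_hom q (t*x) (t*y) (t*z) = t^2 * quad_hom q x y z"
proof -
  obtain A B C D E F where q: "q = (A, B, C, D, E, F)" by (cases q) auto
  show ?thesis unfolding q by simp algebra
qed

lemma in_proj: "z \<noteq> 0 \<Longrightarrow> x = z * fst B \<Longrightarrow> y = z * snd B \<Longrightarrow> (x, y, z) \<in> proj_pt B"
  unfolding proj_pt_def by auto

lemma P0_unique:
  fixes \<alpha> \<beta> a1 a2 a3 a4 a5 x y z :: complex
  assumes "D0 \<alpha> \<beta> a1 a2 a3 \<noteq> 0" "\<alpha>*x + \<beta>*y = 0"
    "\<alpha>*(a2*x + a3*y + a5*z) - \<beta>*(a1*x + a2*y + a4*z) = z"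
  shows "x = z * fst (P0 \<alpha> \<beta> a1 a2 a3 a4 a5) \<and> y = z * snd (P0 \<alpha> \<beta> a1 a2 a3 a4 a5)"
proof -
  have 1: "D0 \<alpha> \<beta> a1 a2 a3 * x = - \<beta>*(1 - \<alpha>*a5 + \<beta>*a4) * z"
    using assms(2,3) unfolding D0_def by algebra
  have 2: "D0 \<alpha> \<beta> a1 a2 a3 * y = \<alpha>*(1 - \<alpha>*a5 + \<beta>*a4) * z"
    using assms(2,3) unfolding D0_def by algebra
  show ?thesis using 1 2 assms(1) unfolding P0_def by (simp add: field_simps)
qed

lemma P0_prop:
  fixes \<alpha> \<beta> a1 a2 a3 a4 a5 :: complex
  assumes "D0 \<alpha> \<beta> a1 a2 a3 \<noteq> 0"
  shows "\<alpha>*fst (P0 \<alpha> \<beta> a1 a2 a3 a4 a5) + \<beta>*snd (P0 \<alpha> \<beta> a1 a2 a3 a4 a5) = 0"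
    "\<alpha>*(a2*fst (P0 \<alpha> \<beta> a1 a2 a3 a4 a5) + a3*snd (P0 \<alpha> \<beta> a1 a2 a3 a4 a5) + a5)
      - \<beta>*(a1*fst (P0 \<alpha> \<beta> a1 a2 a3 a4 a5) + a2*snd (P0 \<alpha> \<beta> a1 a2 a3 a4 a5) + a4) = 1"
  using assms unfolding P0_def by (simp_all add: field_simps) (simp_all add: D0_def; algebra)

lemma Q_unique:
  fixes \<alpha> \<beta> a1 a2 a3 a4 a5 x y z s s' :: complex
  assumes "Dl \<alpha> \<beta> a1 a2 a3 s' \<noteq> 0" "\<alpha>*x + \<beta>*y = s*z"
    "(a2 + s'*gamma1 a1 a2 a3)*x + a3*y + ee a2 a3 a4 a5 s' * z = 0"
  shows "x = z * fst (Qp \<alpha> \<beta> a1 a2 a3 a4 a5 s s') \<and> y = z * snd (Qp \<alpha> \<beta> a1 a2 a3 a4 a5 s s')"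
proof -
  have 1: "Dl \<alpha> \<beta> a1 a2 a3 s' * x = (s*a3 + \<beta>*ee a2 a3 a4 a5 s') * z"
    using assms(2,3) unfolding Dl_def by algebra
  have 2: "Dl \<alpha> \<beta> a1 a2 a3 s' * y = - (\<alpha>*ee a2 a3 a4 a5 s' + s*(a2 + s'*gamma1 a1 a2 a3)) * z"
    using assms(2,3) unfolding Dl_def by algebra
  show ?thesis using 1 2 assms(1) unfolding Qp_def by (simp add: field_simps)
qed

lemma Q_prop:
  fixes \<alpha> \<beta> a1 a2 a3 a4 a5 s s' :: complex
  assumes d: "Dl \<alpha> \<beta> a1 a2 a3 s' \<noteq> 0"
  shows "\<alpha>*fst (Qp \<alpha> \<beta> a1 a2 a3 a4 a5 s s') + \<beta>*snd (Qp \<alpha> \<beta> a1 a2 a3 a4 a5 s s') = s"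
    "(a2 + s'*gamma1 a1 a2 a3)*fst (Qp \<alpha> \<beta> a1 a2 a3 a4 a5 s s') + a3*snd (Qp \<alpha> \<beta> a1 a2 a3 a4 a5 s s')
       + ee a2 a3 a4 a5 s' = 0"
proof -
  define d where "d = Dl \<alpha> \<beta> a1 a2 a3 s'"
  define u where "u = fst (Qp \<alpha> \<beta> a1 a2 a3 a4 a5 s s')"
  define v where "v = snd (Qp \<alpha> \<beta> a1 a2 a3 a4 a5 s s')"
  have dn: "d \<noteq> 0" using d d_def by simp
  have 1: "d * u = s*a3 + \<beta>*ee a2 a3 a4 a5 s'" using dn unfolding u_def d_def Qp_def by simp
  have 2: "d * v = - (\<alpha>*ee a2 a3 a4 a5 s' + s*(a2 + s'*gamma1 a1 a2 a3))"
    using dn unfolding v_def d_def Qp_def by simp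
  have dd: "d = \<alpha>*a3 - \<beta>*(a2 + s'*gamma1 a1 a2 a3)" unfolding d_def Dl_def ..
  have "d * (\<alpha>*u + \<beta>*v) = d * s" using 1 2 dd by algebra
  then show "\<alpha>*u + \<beta>*v = s" using dn by simp
  have "d * ((a2 + s'*gamma1 a1 a2 a3)*u + a3*v + ee a2 a3 a4 a5 s') = d * 0" using 1 2 dd by algebra
  then show "(a2 + s'*gamma1 a1 a2 a3)*u + a3*v + ee a2 a3 a4 a5 s' = 0" using dn
    by (simp only: mult_cancel_left) simp
qed


lemma sing_sub:
  fixes \<alpha> \<beta> a1 a2 a3 a4 a5 c x y z :: complex
  assumes g1: "gamma1 a1 a2 a3 \<noteq> 0" and d0: "D0 \<alpha> \<beta> a1 a2 a3 \<noteq> 0"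
    and dc: "Dl \<alpha> \<beta> a1 a2 a3 c \<noteq> 0" and dmc: "Dl \<alpha> \<beta> a1 a2 a3 (-c) \<noteq> 0"
    and cc: "c^2 * gamma1 a1 a2 a3 = 1"
    and nz: "(x, y, z) \<noteq> (0, 0, 0)" and h: "kahan_hom (fvf \<alpha> \<beta> a1 a2 a3 a4 a5) x y z = (0, 0, 0)"
  shows "(x, y, z) \<in> proj_pt (P0 \<alpha> \<beta> a1 a2 a3 a4 a5) \<union> proj_pt (Qp \<alpha> \<beta> a1 a2 a3 a4 a5 c c)
           \<union> proj_pt (Qp \<alpha> \<beta> a1 a2 a3 a4 a5 (-c) (-c))"
proof -
  define l where "l = \<alpha>*x + \<beta>*y"
  define hx where "hx = a1*x + a2*y + a4*z"
  define hy where "hy = a2*x + a3*y + a5*z"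
  define k where "k = \<alpha>*hy - \<beta>*hx"
  define g where "g = gamma1 a1 a2 a3"
  have gg: "g = a2^2 - a1*a3" unfolding g_def gamma1_def ..
  have "kahan_hom (fvf \<alpha> \<beta> a1 a2 a3 a4 a5) x y z =
    ((z - k + l*a2 + \<alpha>*hy)*(x + a5*l) + (l*a3 + \<beta>*hy)*(y - a4*l),
     (- l*a1 - \<alpha>*hx)*(x + a5*l) + (z - k - l*a2 - \<beta>*hx)*(y - a4*l),
     z^2 - g * l^2 - z*k - l*(\<alpha>*(a2*hy - a3*hx) + \<beta>*(a2*hx - a1*hy)))"
    unfolding kh l_def hx_def hy_def k_def g_def Let_def ..
  then have R: "(z - k + l*a2 + \<alpha>*hy)*(x + a5*l) + (l*a3 + \<beta>*hy)*(y - a4*l) = 0"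
    and S: "(- l*a1 - \<alpha>*hx)*(x + a5*l) + (z - k - l*a2 - \<beta>*hx)*(y - a4*l) = 0"
    and T: "z^2 - g * l^2 - z*k - l*(\<alpha>*(a2*hy - a3*hx) + \<beta>*(a2*hx - a1*hy)) = 0"
    using h by auto
  show ?thesis
  proof (cases "z = 0")
    case True
    have "-2*g*l^2 = 0" using T True l_def hx_def hy_def gg by algebra
    then have l0: "l = 0" using g1 g_def by simp
    have kx: "k*x = 0" using R True l0 l_def hx_def hy_def k_def by algebra
    have ky: "k*y = 0" using S True l0 l_def hx_def hy_def k_def by algebra
    have ak: "\<alpha>*k = D0 \<alpha> \<beta> a1 a2 a3 * y" using True l0 l_def hx_def hy_def k_def unfolding D0_def by algebra
    have bk: "\<beta>*k = - D0 \<alpha> \<beta> a1 a2 a3 * x" using True l0 l_def hx_def hy_def k_def unfolding D0_def by algebra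
    have "x = 0 \<and> y = 0"
    proof (cases "k = 0")
      case True then show ?thesis using ak bk d0 by simp
    next
      case False then show ?thesis using kx ky by simp
    qed
    then show ?thesis using nz True by simp
  next
    case False
    define U1 where "U1 = z*hy + l*(a2*hy - a3*hx)"
    define U2 where "U2 = -z*hx + l*(a2*hx - a1*hy)"
    have zR: "z*((z - k + l*a2 + \<alpha>*hy)*(x + a5*l) + (l*a3 + \<beta>*hy)*(y - a4*l))
       = (z^2 - g * l^2 - z*k - l*(\<alpha>*(a2*hy - a3*hx) + \<beta>*(a2*hx - a1*hy)))*x + 2*l*U1"
      unfolding U1_def l_def hx_def hy_def k_def gg by algebra
    have zS: "z*((- l*a1 - \<alpha>*hx)*(x + a5*l) + (z - k - l*a2 - \<beta>*hx)*(y - a4*l))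
       = (z^2 - g * l^2 - z*k - l*(\<alpha>*(a2*hy - a3*hx) + \<beta>*(a2*hx - a1*hy)))*y + 2*l*U2"
      unfolding U2_def l_def hx_def hy_def k_def gg by algebra
    have lU1: "l*U1 = 0" using zR R T by simp
    have lU2: "l*U2 = 0" using zS S T by simp
    show ?thesis
    proof (cases "l = 0")
      case True
      have "z*(z - k) = 0" using T True by (simp add: power2_eq_square algebra_simps)
      then have "k = z" using False by simp
      then have "x = z * fst (P0 \<alpha> \<beta> a1 a2 a3 a4 a5) \<and> y = z * snd (P0 \<alpha> \<beta> a1 a2 a3 a4 a5)"
        using P0_unique[OF d0, of x y a5 z a4] True l_def hx_def hy_def k_def by simp
      then show ?thesis using in_proj False by blast
    next
      case ln: False
      have u1: "U1 = 0" and u2: "U2 = 0" using lU1 lU2 ln by auto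
      have "z^2 - g*l^2 - z*k - l*(\<alpha>*(a2*hy - a3*hx) + \<beta>*(a2*hx - a1*hy)) = z^2 - g*l^2 - (\<alpha>*U1 + \<beta>*U2)"
        unfolding U1_def U2_def k_def by algebra
      then have zz: "z^2 = g*l^2" using T u1 u2 by simp
      have "(l - c*z)*(l + c*z) = 0" using zz cc g_def by algebra
      then obtain s where s: "s = c \<or> s = -c" and ls: "l = s*z"
        by (metis add.inverse_inverse eq_iff_diff_eq_0 mult_eq_0_iff mult_minus_left neg_eq_iff_add_eq_0)
      have "z*((a2 + s*g)*x + a3*y + ee a2 a3 a4 a5 s * z) = U1"
        unfolding U1_def ee_def using ls hx_def hy_def gg by algebra
      then have E: "(a2 + s*g)*x + a3*y + ee a2 a3 a4 a5 s * z = 0" using u1 False by simp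
      have ds: "Dl \<alpha> \<beta> a1 a2 a3 s \<noteq> 0" using s dc dmc by auto
      have "x = z * fst (Qp \<alpha> \<beta> a1 a2 a3 a4 a5 s s) \<and> y = z * snd (Qp \<alpha> \<beta> a1 a2 a3 a4 a5 s s)"
        using Q_unique[OF ds, of x y s z] ls l_def E g_def by simp
      then have "(x, y, z) \<in> proj_pt (Qp \<alpha> \<beta> a1 a2 a3 a4 a5 s s)" using in_proj False by blast
      then show ?thesis using s by auto
    qed
  qed
qed


lemma kh_scale:
  fixes \<alpha> \<beta> a1 a2 a3 a4 a5 x y z t :: complex
  assumes "kahan_hom (fvf \<alpha> \<beta> a1 a2 a3 a4 a5) x y z = (0, 0, 0)"
  shows "kahan_hom (fvf \<alpha> \<beta> a1 a2 a3 a4 a5) (t*x) (t*y) (t*z) = (0, 0, 0)"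
proof -
  have e: "kahan_hom (fvf \<alpha> \<beta> a1 a2 a3 a4 a5) (t*x) (t*y) (t*z) =
    (case kahan_hom (fvf \<alpha> \<beta> a1 a2 a3 a4 a5) x y z of (R, S, T) \<Rightarrow> (t^2*R, t^2*S, t^2*T))"
    unfolding kh Let_def by (simp; intro conjI; algebra)
  show ?thesis unfolding e assms by simp
qed

lemma sing_P0:
  fixes \<alpha> \<beta> a1 a2 a3 a4 a5 :: complex
  assumes d0: "D0 \<alpha> \<beta> a1 a2 a3 \<noteq> 0"
  shows "kahan_hom (fvf \<alpha> \<beta> a1 a2 a3 a4 a5) (fst (P0 \<alpha> \<beta> a1 a2 a3 a4 a5)) (snd (P0 \<alpha> \<beta> a1 a2 a3 a4 a5)) 1 = (0, 0, 0)"
proof -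
  define u where "u = fst (P0 \<alpha> \<beta> a1 a2 a3 a4 a5)"
  define v where "v = snd (P0 \<alpha> \<beta> a1 a2 a3 a4 a5)"
  have p1: "\<alpha>*u + \<beta>*v = 0" and p2: "\<alpha>*(a2*u + a3*v + a5) - \<beta>*(a1*u + a2*v + a4) = 1"
    using P0_prop[OF d0] u_def v_def by auto
  show ?thesis unfolding u_def[symmetric] v_def[symmetric] kh Let_def gamma1_def
    using p1 p2 by (simp; intro conjI; algebra)
qed

lemma sing_Q:
  fixes \<alpha> \<beta> a1 a2 a3 a4 a5 s :: complex
  assumes ds: "Dl \<alpha> \<beta> a1 a2 a3 s \<noteq> 0" and a3: "a3 \<noteq> 0" and ss: "s^2 * gamma1 a1 a2 a3 = 1"
  shows "kahan_hom (fvf \<alpha> \<beta> a1 a2 a3 a4 a5) (fst (Qp \<alpha> \<beta> a1 a2 a3 a4 a5 s s)) (snd (Qp \<alpha> \<beta> a1 a2 a3 a4 a5 s s)) 1 = (0, 0, 0)"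
proof -
  define x where "x = fst (Qp \<alpha> \<beta> a1 a2 a3 a4 a5 s s)"
  define y where "y = snd (Qp \<alpha> \<beta> a1 a2 a3 a4 a5 s s)"
  define g where "g = gamma1 a1 a2 a3"
  have gg: "g = a2^2 - a1*a3" unfolding g_def gamma1_def ..
  have p1: "\<alpha>*x + \<beta>*y = s" and p2: "(a2 + s*g)*x + a3*y + ee a2 a3 a4 a5 s = 0"
    using Q_prop[OF ds] x_def y_def g_def by auto
  define l where "l = \<alpha>*x + \<beta>*y"
  define hx where "hx = a1*x + a2*y + a4"
  define hy where "hy = a2*x + a3*y + a5"
  define k where "k = \<alpha>*hy - \<beta>*hx"
  define U1 where "U1 = hy + l*(a2*hy - a3*hx)"
  define U2 where "U2 = -hx + l*(a2*hx - a1*hy)"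
  have sn: "s \<noteq> 0" using ss by auto
  have "U1 = ((a2 + s*g)*x + a3*y + ee a2 a3 a4 a5 s) + (l - s)*(a2*hy - a3*hx)"
    unfolding U1_def l_def hx_def hy_def ee_def gg by algebra
  then have u1: "U1 = 0" using p1 p2 l_def by simp
  have "s*a3*U2 = (1 - s*a2)*U1 - (1 - s^2*g)*hy + s*a3*(l - s)*(a2*hx - a1*hy) - (1-s*a2)*(l-s)*(a2*hy - a3*hx)"
    unfolding U1_def U2_def gg by algebra
  then have "s*a3*U2 = 0" using u1 p1 ss l_def g_def by (simp add: mult.commute)
  then have u2: "U2 = 0" using sn a3 by simp
  have T: "1 - g * l^2 - k - l*(\<alpha>*(a2*hy - a3*hx) + \<beta>*(a2*hx - a1*hy)) = 0"
  proof -
    have "1 - g * l^2 - k - l*(\<alpha>*(a2*hy - a3*hx) + \<beta>*(a2*hx - a1*hy)) = 1 - g*l^2 - (\<alpha>*U1 + \<beta>*U2)"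
      unfolding U1_def U2_def k_def by algebra
    also have "\<dots> = 0" using u1 u2 ss p1 l_def g_def by (simp add: mult.commute)
    finally show ?thesis .
  qed
  have R: "(1 - k + l*a2 + \<alpha>*hy)*(x + a5*l) + (l*a3 + \<beta>*hy)*(y - a4*l)
       = (1 - g * l^2 - k - l*(\<alpha>*(a2*hy - a3*hx) + \<beta>*(a2*hx - a1*hy)))*x + 2*l*U1"
    unfolding U1_def l_def hx_def hy_def k_def gg by algebra
  have S: "(- l*a1 - \<alpha>*hx)*(x + a5*l) + (1 - k - l*a2 - \<beta>*hx)*(y - a4*l)
       = (1 - g * l^2 - k - l*(\<alpha>*(a2*hy - a3*hx) + \<beta>*(a2*hx - a1*hy)))*y + 2*l*U2"
    unfolding U2_def l_def hx_def hy_def k_def gg by algebra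
  have "kahan_hom (fvf \<alpha> \<beta> a1 a2 a3 a4 a5) x y 1 =
    ((1 - k + l*a2 + \<alpha>*hy)*(x + a5*l) + (l*a3 + \<beta>*hy)*(y - a4*l),
     (- l*a1 - \<alpha>*hx)*(x + a5*l) + (1 - k - l*a2 - \<beta>*hx)*(y - a4*l),
     1^2 - g * l^2 - 1*k - l*(\<alpha>*(a2*hy - a3*hx) + \<beta>*(a2*hx - a1*hy)))"
    unfolding kh l_def hx_def hy_def k_def g_def Let_def by simp
  then show ?thesis using R S T u1 u2 unfolding x_def y_def by simp
qed

lemma proj_sub:
  fixes \<alpha> \<beta> a1 a2 a3 a4 a5 :: complex
  assumes "kahan_hom (fvf \<alpha> \<beta> a1 a2 a3 a4 a5) (fst B) (snd B) 1 = (0, 0, 0)"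
  shows "proj_pt B \<subseteq> kahan_sing (fvf \<alpha> \<beta> a1 a2 a3 a4 a5)"
proof
  fix p assume "p \<in> proj_pt B"
  then obtain t where t: "t \<noteq> 0" "p = (t * fst B, t * snd B, t)" unfolding proj_pt_def by auto
  have "kahan_hom (fvf \<alpha> \<beta> a1 a2 a3 a4 a5) (t * fst B) (t * snd B) (t*1) = (0, 0, 0)"
    by (rule kh_scale[OF assms])
  then show "p \<in> kahan_sing (fvf \<alpha> \<beta> a1 a2 a3 a4 a5)" unfolding kahan_sing_def using t by simp
qed

lemma sing_eq:
  fixes \<alpha> \<beta> a1 a2 a3 a4 a5 c :: complex
  assumes g1: "gamma1 a1 a2 a3 \<noteq> 0" and d0: "D0 \<alpha> \<beta> a1 a2 a3 \<noteq> 0" and a3: "a3 \<noteq> 0"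
    and dc: "Dl \<alpha> \<beta> a1 a2 a3 c \<noteq> 0" and dmc: "Dl \<alpha> \<beta> a1 a2 a3 (-c) \<noteq> 0"
    and cc: "c^2 * gamma1 a1 a2 a3 = 1"
  shows "kahan_sing (fvf \<alpha> \<beta> a1 a2 a3 a4 a5) = proj_pt (P0 \<alpha> \<beta> a1 a2 a3 a4 a5) \<union> proj_pt (Qp \<alpha> \<beta> a1 a2 a3 a4 a5 c c)
           \<union> proj_pt (Qp \<alpha> \<beta> a1 a2 a3 a4 a5 (-c) (-c))" (is "?L = ?R")
proof
  show "?L \<subseteq> ?R"
  proof
    fix p assume p: "p \<in> ?L"
    obtain x y z where pe: "p = (x, y, z)" by (cases p) auto
    show "p \<in> ?R" using p unfolding pe kahan_sing_def
      using sing_sub[OF g1 d0 dc dmc cc, of x y z a4 a5] by blast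
  qed
  have cc': "(-c)^2 * gamma1 a1 a2 a3 = 1" using cc by simp
  show "?R \<subseteq> ?L"
    using proj_sub[OF sing_P0[OF d0]] proj_sub[OF sing_Q[OF dc a3 cc]] proj_sub[OF sing_Q[OF dmc a3 cc']]
    by blast
qed


lemma Ch:
  fixes \<alpha> \<beta> a1 a2 a3 a4 a5 x y z :: complex
  shows "quad_hom (Cconic \<alpha> \<beta> a1 a2 a3 a4 a5) x y z =
    (a1*x^2 + 2*a2*x*y + a3*y^2 + 2*a4*x*z + 2*a5*y*z - gamma2 a1 a2 a3 a4 a5 * (\<alpha>*x + \<beta>*y)^2) / 2"
  unfolding Cconic_def Hfun_def ell_def by (simp add: field_simps; algebra)

lemma Dh:
  fixes \<alpha> \<beta> a1 a2 a3 x y z :: complex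
  shows "quad_hom (Dconic \<alpha> \<beta> a1 a2 a3) x y z = z^2 - gamma1 a1 a2 a3 * (\<alpha>*x + \<beta>*y)^2"
  unfolding Dconic_def quad_const_def ell_def by (simp; algebra)

lemma cid1:
  fixes pA pB aA aB aC aD aE x y z g X Y QF C2 l :: complex
  assumes "g = aB^2 - aA*aC" "X = g*x - (aC*aD - aB*aE)*z" "Y = g*y - (aA*aE - aB*aD)*z"
    "QF = aA*X^2 + 2*aB*X*Y + aC*Y^2" "l = pA*x + pB*y"
    "C2 = aA*x^2 + 2*aB*x*y + aC*y^2 + 2*aD*x*z + 2*aE*y*z - gamma2 aA aB aC aD aE * l^2"
  shows "g^2*C2 = QF + g*gamma2 aA aB aC aD aE*z^2 - g^2*gamma2 aA aB aC aD aE*l^2"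
  unfolding assms gamma2_def by algebra

lemma cid2:
  fixes aA aB aC aD aE x y z g X Y s :: complex
  assumes "g = aB^2 - aA*aC" "X = g*x - (aC*aD - aB*aE)*z" "Y = g*y - (aA*aE - aB*aD)*z"
  shows "g*((aB + s*g)*x + aC*y + ee aB aC aD aE s * z) = (aB + s*g)*X + aC*Y"
  unfolding assms ee_def by algebra

lemma cid3:
  fixes aA aB aC X Y QF g c :: complex
  assumes "g = aB^2 - aA*aC" "QF = aA*X^2 + 2*aB*X*Y + aC*Y^2"
  shows "aC*QF = ((aB + c*g)*X + aC*Y) * ((aB + (-c)*g)*X + aC*Y) + (c^2*g - 1)*g*X^2"
  unfolding assms by algebra

lemma pen_sub:
  fixes \<alpha> \<beta> a1 a2 a3 a4 a5 c x y z :: complex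
  assumes g1: "gamma1 a1 a2 a3 \<noteq> 0" and d0: "D0 \<alpha> \<beta> a1 a2 a3 \<noteq> 0"
    and dc: "Dl \<alpha> \<beta> a1 a2 a3 c \<noteq> 0" and dmc: "Dl \<alpha> \<beta> a1 a2 a3 (-c) \<noteq> 0"
    and cc: "c^2 * gamma1 a1 a2 a3 = 1"
    and nz: "(x, y, z) \<noteq> (0, 0, 0)"
    and hC: "quad_hom (Cconic \<alpha> \<beta> a1 a2 a3 a4 a5) x y z = 0"
    and hD: "quad_hom (Dconic \<alpha> \<beta> a1 a2 a3) x y z = 0"
  shows "\<exists>s s'. (s = c \<or> s = -c) \<and> (s' = c \<or> s' = -c) \<and> (x, y, z) \<in> proj_pt (Qp \<alpha> \<beta> a1 a2 a3 a4 a5 s s')"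
proof -
  define g where "g = a2^2 - a1*a3"
  have gg: "gamma1 a1 a2 a3 = g" unfolding g_def gamma1_def ..
  define X where "X = g*x - (a3*a4 - a2*a5)*z"
  define Y where "Y = g*y - (a1*a5 - a2*a4)*z"
  define QF where "QF = a1*X^2 + 2*a2*X*Y + a3*Y^2"
  define l where "l = \<alpha>*x + \<beta>*y"
  define C2 where "C2 = a1*x^2 + 2*a2*x*y + a3*y^2 + 2*a4*x*z + 2*a5*y*z - gamma2 a1 a2 a3 a4 a5 * l^2"
  define E where "E = (\<lambda>s. (a2 + s*g)*x + a3*y + ee a2 a3 a4 a5 s * z)"
  note id1 = cid1[OF g_def X_def Y_def QF_def l_def C2_def]
  note id2 = cid2[OF g_def X_def Y_def]
  note id3 = cid3[OF g_def QF_def]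
  have C0: "C2 = 0" using hC unfolding Ch C2_def l_def by simp
  have D: "z^2 = g*l^2" using hD unfolding Dh gg l_def by simp
  have gn: "g \<noteq> 0" using g1 gg by simp
  show ?thesis
  proof (cases "z = 0")
    case True
    then have "g*l^2 = 0" using D by simp
    then have l0: "l = 0" using gn by simp
    have 1: "\<alpha>^2*C2 = D0 \<alpha> \<beta> a1 a2 a3 * y^2" using True l0 l_def unfolding C2_def D0_def by algebra
    have 2: "\<beta>^2*C2 = D0 \<alpha> \<beta> a1 a2 a3 * x^2" using True l0 l_def unfolding C2_def D0_def by algebra
    have "x = 0" "y = 0" using 1 2 C0 d0 by auto
    then show ?thesis using True nz by simp
  next
    case False
    have "l^2 = c^2*z^2" using D cc gg by (metis mult.assoc mult.commute mult_1)
    then have "(l - c*z)*(l + c*z) = 0" by algebra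
    then obtain s where s: "s = c \<or> s = -c" and ls: "l = s*z"
      by (metis add.inverse_inverse eq_iff_diff_eq_0 mult_eq_0_iff mult_minus_left neg_eq_iff_add_eq_0)
    have cg: "c^2*g = 1" using cc gg by simp
    have "g^2*gamma2 a1 a2 a3 a4 a5*l^2 - g*gamma2 a1 a2 a3 a4 a5*z^2 =
      g^2*gamma2 a1 a2 a3 a4 a5*(l^2 - c^2*z^2) + g*gamma2 a1 a2 a3 a4 a5*z^2*(c^2*g - 1)" by algebra
    then have e: "g^2*gamma2 a1 a2 a3 a4 a5*l^2 = g*gamma2 a1 a2 a3 a4 a5*z^2"
      using \<open>l^2 = c^2*z^2\<close> cg by simp
    have "g^2*C2 = QF" by (subst id1) (simp add: e)
    then have Q0: "QF = 0" using C0 by simp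
    have "g*E c = (a2 + c*g)*X + a3*Y" "g*E (-c) = (a2 + (-c)*g)*X + a3*Y"
      using id2[of c] id2[of "-c"] unfolding E_def by auto
    moreover have "(c^2*g - 1) = 0" using cc gg by simp
    ultimately have "(g*E c)*(g*E (-c)) = 0" using id3[of c] Q0 by simp
    then obtain s' where s': "s' = c \<or> s' = -c" and Es: "E s' = 0" using gn by auto
    have ds': "Dl \<alpha> \<beta> a1 a2 a3 s' \<noteq> 0" using s' dc dmc by auto
    have "x = z * fst (Qp \<alpha> \<beta> a1 a2 a3 a4 a5 s s') \<and> y = z * snd (Qp \<alpha> \<beta> a1 a2 a3 a4 a5 s s')"
      using Q_unique[OF ds', of x y s z] ls l_def Es E_def gg by simp
    then show ?thesis using in_proj False s s' by blast
  qed
qed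

lemma pen_Q:
  fixes \<alpha> \<beta> a1 a2 a3 a4 a5 c s s' :: complex
  assumes g1: "gamma1 a1 a2 a3 \<noteq> 0" and a3: "a3 \<noteq> 0"
    and ds: "Dl \<alpha> \<beta> a1 a2 a3 s' \<noteq> 0"
    and cc: "c^2 * gamma1 a1 a2 a3 = 1" and s: "s = c \<or> s = -c" and s': "s' = c \<or> s' = -c"
  shows "quad_hom (Cconic \<alpha> \<beta> a1 a2 a3 a4 a5) (fst (Qp \<alpha> \<beta> a1 a2 a3 a4 a5 s s')) (snd (Qp \<alpha> \<beta> a1 a2 a3 a4 a5 s s')) 1 = 0
     \<and> quad_hom (Dconic \<alpha> \<beta> a1 a2 a3) (fst (Qp \<alpha> \<beta> a1 a2 a3 a4 a5 s s')) (snd (Qp \<alpha> \<beta> a1 a2 a3 a4 a5 s s')) 1 = 0"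
proof -
  define x where "x = fst (Qp \<alpha> \<beta> a1 a2 a3 a4 a5 s s')"
  define y where "y = snd (Qp \<alpha> \<beta> a1 a2 a3 a4 a5 s s')"
  define z :: complex where "z = 1"
  define g where "g = a2^2 - a1*a3"
  have gg: "gamma1 a1 a2 a3 = g" unfolding g_def gamma1_def ..
  define X where "X = g*x - (a3*a4 - a2*a5)*z"
  define Y where "Y = g*y - (a1*a5 - a2*a4)*z"
  define QF where "QF = a1*X^2 + 2*a2*X*Y + a3*Y^2"
  define l where "l = \<alpha>*x + \<beta>*y"
  define C2 where "C2 = a1*x^2 + 2*a2*x*y + a3*y^2 + 2*a4*x*z + 2*a5*y*z - gamma2 a1 a2 a3 a4 a5 * l^2"
  define E where "E = (\<lambda>s. (a2 + s*g)*x + a3*y + ee a2 a3 a4 a5 s * z)"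
  note id1 = cid1[OF g_def X_def Y_def QF_def l_def C2_def]
  note id2 = cid2[OF g_def X_def Y_def]
  note id3 = cid3[OF g_def QF_def]
  have p1: "l = s" and p2: "E s' = 0" using Q_prop[OF ds] unfolding l_def x_def y_def E_def z_def gg by auto
  have gn: "g \<noteq> 0" using g1 gg by simp
  have ls: "l^2 * g = 1" using p1 s cc gg by auto
  have "(c^2*g - 1) = 0" using cc gg by simp
  moreover have "g*E c = (a2 + c*g)*X + a3*Y" "g*E (-c) = (a2 + (-c)*g)*X + a3*Y"
      using id2[of c] id2[of "-c"] unfolding E_def by auto
  moreover have "(g*E c)*(g*E (-c)) = 0" using p2 s' by auto
  ultimately have "a3*QF = 0" using id3[of c] by simp
  then have Q0: "QF = 0" using a3 by simp
  have "g^2*C2 = QF + g*gamma2 a1 a2 a3 a4 a5*z^2 - g*gamma2 a1 a2 a3 a4 a5*(l^2*g)" using id1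
    by (simp add: power2_eq_square algebra_simps)
  then have "g^2*C2 = 0" using Q0 ls z_def by simp
  then have C0: "C2 = 0" using gn by simp
  show ?thesis unfolding x_def[symmetric] y_def[symmetric] Ch Dh
    using C0 ls gg unfolding C2_def z_def l_def by (simp add: mult.commute)
qed


lemma proj_pen:
  fixes \<alpha> \<beta> a1 a2 a3 a4 a5 :: complex
  assumes "quad_hom (Cconic \<alpha> \<beta> a1 a2 a3 a4 a5) (fst B) (snd B) 1 = 0
     \<and> quad_hom (Dconic \<alpha> \<beta> a1 a2 a3) (fst B) (snd B) 1 = 0"
  shows "proj_pt B \<subseteq> pencil_base (Cconic \<alpha> \<beta> a1 a2 a3 a4 a5) (Dconic \<alpha> \<beta> a1 a2 a3)"
proof
  fix p assume "p \<in> proj_pt B"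
  then obtain t where t: "t \<noteq> 0" "p = (t * fst B, t * snd B, t)" unfolding proj_pt_def by auto
  have "quad_hom (Cconic \<alpha> \<beta> a1 a2 a3 a4 a5) (t * fst B) (t * snd B) (t*1) = 0"
       "quad_hom (Dconic \<alpha> \<beta> a1 a2 a3) (t * fst B) (t * snd B) (t*1) = 0"
    using assms unfolding qh_scale by auto
  then show "p \<in> pencil_base (Cconic \<alpha> \<beta> a1 a2 a3 a4 a5) (Dconic \<alpha> \<beta> a1 a2 a3)"
    unfolding pencil_base_def using t by simp
qed

lemma pen_eq:
  fixes \<alpha> \<beta> a1 a2 a3 a4 a5 c :: complex
  assumes g1: "gamma1 a1 a2 a3 \<noteq> 0" and d0: "D0 \<alpha> \<beta> a1 a2 a3 \<noteq> 0" and a3: "a3 \<noteq> 0"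
    and dc: "Dl \<alpha> \<beta> a1 a2 a3 c \<noteq> 0" and dmc: "Dl \<alpha> \<beta> a1 a2 a3 (-c) \<noteq> 0"
    and cc: "c^2 * gamma1 a1 a2 a3 = 1"
  shows "pencil_base (Cconic \<alpha> \<beta> a1 a2 a3 a4 a5) (Dconic \<alpha> \<beta> a1 a2 a3) =
     proj_pt (Qp \<alpha> \<beta> a1 a2 a3 a4 a5 (-c) (-c)) \<union> proj_pt (Qp \<alpha> \<beta> a1 a2 a3 a4 a5 (-c) c)
     \<union> proj_pt (Qp \<alpha> \<beta> a1 a2 a3 a4 a5 c c) \<union> proj_pt (Qp \<alpha> \<beta> a1 a2 a3 a4 a5 c (-c))" (is "?L = ?R")
proof
  show "?L \<subseteq> ?R"
  proof
    fix p assume p: "p \<in> ?L"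
    obtain x y z where pe: "p = (x, y, z)" by (cases p) auto
    have nz: "(x, y, z) \<noteq> (0,0,0)" and all: "\<forall>lam. quad_hom (Cconic \<alpha> \<beta> a1 a2 a3 a4 a5) x y z
         - lam * quad_hom (Dconic \<alpha> \<beta> a1 a2 a3) x y z = 0"
      using p unfolding pe pencil_base_def by auto
    have hC: "quad_hom (Cconic \<alpha> \<beta> a1 a2 a3 a4 a5) x y z = 0" using spec[OF all, of 0] by simp
    have hD: "quad_hom (Dconic \<alpha> \<beta> a1 a2 a3) x y z = 0" using spec[OF all, of 1] hC by simp
    show "p \<in> ?R" using pen_sub[OF g1 d0 dc dmc cc nz hC hD] unfolding pe by blast
  qed
  show "?R \<subseteq> ?L"
    using proj_pen[OF pen_Q[OF g1 a3 dmc cc]] proj_pen[OF pen_Q[OF g1 a3 dc cc]]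
    by blast
qed

lemma lin_key:
  fixes \<alpha> \<beta> a1 a2 a3 a4 a5 x y s :: complex
  assumes a3: "a3 \<noteq> 0" and ss: "s^2 * gamma1 a1 a2 a3 = 1"
    and E: "(a2 + s*gamma1 a1 a2 a3)*x + a3*y + ee a2 a3 a4 a5 s = 0"
  shows "gamma1 a1 a2 a3 * (s * (\<alpha>*(a2*x + a3*y + a5) - \<beta>*(a1*x + a2*y + a4)) + (\<alpha>*x + \<beta>*y))
     = \<alpha>*(a3*a4 - a2*a5) + \<beta>*(a1*a5 - a2*a4)"
proof -
  define g where "g = a2^2 - a1*a3"
  have gg: "gamma1 a1 a2 a3 = g" unfolding g_def gamma1_def ..
  define X where "X = g*x - (a3*a4 - a2*a5)"
  define k where "k = \<alpha>*(a2*x + a3*y + a5) - \<beta>*(a1*x + a2*y + a4)"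
  define m where "m = \<alpha>*(a3*a4 - a2*a5) + \<beta>*(a1*a5 - a2*a4)"
  define EE where "EE = (a2 + s*g)*x + a3*y + ee a2 a3 a4 a5 s"
  have "s*a3*(g*(s*k + (\<alpha>*x + \<beta>*y)) - m) = (s*a3*\<alpha> + \<beta>*(1 - s*a2))*(s*g*EE - (s^2*g - 1)*X) + \<beta>*(s^2*g - 1)*X"
    unfolding g_def X_def k_def m_def EE_def ee_def by algebra
  moreover have "EE = 0" using E gg EE_def by simp
  moreover have "s^2*g - 1 = 0" using ss gg by simp
  ultimately have "s*a3*(g*(s*k + (\<alpha>*x + \<beta>*y)) - m) = 0" by simp
  moreover have "s \<noteq> 0" using ss by auto
  ultimately show ?thesis using a3 unfolding gg k_def m_def by simp
qed

lemma mid_gen: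
  fixes \<alpha> \<beta> a1 a2 a3 a4 a5 :: complex
  assumes d0: "D0 \<alpha> \<beta> a1 a2 a3 \<noteq> 0"
    and l: "\<alpha>*fst p + \<beta>*snd p + (\<alpha>*fst q + \<beta>*snd q) = 0"
    and k: "(\<alpha>*(a2*fst p + a3*snd p + a5) - \<beta>*(a1*fst p + a2*snd p + a4))
          + (\<alpha>*(a2*fst q + a3*snd q + a5) - \<beta>*(a1*fst q + a2*snd q + a4)) = 2"
  shows "midpt p q = P0 \<alpha> \<beta> a1 a2 a3 a4 a5"
proof -
  have "fst (midpt p q) = 1 * fst (P0 \<alpha> \<beta> a1 a2 a3 a4 a5) \<and> snd (midpt p q) = 1 * snd (P0 \<alpha> \<beta> a1 a2 a3 a4 a5)"
  proof (rule P0_unique[OF d0])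
    show "\<alpha> * fst (midpt p q) + \<beta> * snd (midpt p q) = 0" using l unfolding midpt_def by (simp add: field_simps) algebra
    show "\<alpha> * (a2 * fst (midpt p q) + a3 * snd (midpt p q) + a5 * 1) - \<beta> * (a1 * fst (midpt p q) + a2 * snd (midpt p q) + a4 * 1) = 1"
      using k unfolding midpt_def by (simp add: field_simps) algebra
  qed
  then show ?thesis by (simp add: prod_eq_iff)
qed

lemma Q_neg:
  fixes \<alpha> \<beta> a1 a2 a3 a4 a5 s s' :: complex
  shows "Qp (-\<alpha>) (-\<beta>) a1 a2 a3 a4 a5 s s' = Qp \<alpha> \<beta> a1 a2 a3 a4 a5 (-s) s'"
proof -
  have e: "Dl (-\<alpha>) (-\<beta>) a1 a2 a3 s' = - Dl \<alpha> \<beta> a1 a2 a3 s'" unfolding Dl_def by algebra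
  have d: "\<And>n d. n / (- d) = (- n) / (d::complex)" by simp
  show ?thesis unfolding Qp_def e d prod_eq_iff fst_conv snd_conv
    by (intro conjI; rule arg_cong[where f="\<lambda>n. n / Dl \<alpha> \<beta> a1 a2 a3 s'"]; algebra)
qed

lemma fvf_neg: "qvf_neg (fvf \<alpha> \<beta> a1 a2 a3 a4 a5) = fvf (-\<alpha>) (-\<beta>) a1 a2 a3 a4 a5"
  unfolding fvf_def ell_def Hfun_def by simp


lemma main:
  fixes \<alpha> \<beta> a1 a2 a3 a4 a5 :: complex
  assumes G: "gamma1 a1 a2 a3 * D0 \<alpha> \<beta> a1 a2 a3 * a3 * ((\<alpha>*a3 - \<beta>*a2)^2 - \<beta>^2*gamma1 a1 a2 a3) \<noteq> 0"
  shows "let f = fvf \<alpha> \<beta> a1 a2 a3 a4 a5;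
        L = (\<lambda>p. lin_eval (ell \<alpha> \<beta>) (fst p) (snd p))
    in (\<alpha>, \<beta>) \<noteq> (0, 0) \<longrightarrow>
       conic_nonsingular (Cconic \<alpha> \<beta> a1 a2 a3 a4 a5) \<longrightarrow>
       (\<forall>c. c^2 * gamma1 a1 a2 a3 = 1 \<longrightarrow>
         (\<exists>B0 B1 B2 B3 B4 B5.
            L B1 = - c \<and> L B3 = c \<and> L B0 = 0 \<and>
            L B2 = - c \<and> L B4 = c \<and> L B5 = 0 \<and>
            kahan_sing f = proj_pt B1 \<union> proj_pt B3 \<union> proj_pt B0 \<and>
            kahan_inv_sing f = proj_pt B2 \<union> proj_pt B4 \<union> proj_pt B5 \<and>
            pencil_base (Cconic \<alpha> \<beta> a1 a2 a3 a4 a5) (Dconic \<alpha> \<beta> a1 a2 a3)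
              = proj_pt B1 \<union> proj_pt B2 \<union> proj_pt B3 \<union> proj_pt B4 \<and>
            B0 = midpt B2 B4 \<and> B5 = midpt B1 B3))"
proof -
  have g1: "gamma1 a1 a2 a3 \<noteq> 0" and d0: "D0 \<alpha> \<beta> a1 a2 a3 \<noteq> 0" and a3: "a3 \<noteq> 0"
    and dp: "(\<alpha>*a3 - \<beta>*a2)^2 - \<beta>^2*gamma1 a1 a2 a3 \<noteq> 0" using G by auto
  have d0': "D0 (-\<alpha>) (-\<beta>) a1 a2 a3 \<noteq> 0" using d0 unfolding D0_def by simp
  have Dneg: "\<And>s. Dl (-\<alpha>) (-\<beta>) a1 a2 a3 s = - Dl \<alpha> \<beta> a1 a2 a3 s" unfolding Dl_def by algebra
  have main: "\<exists>B0 B1 B2 B3 B4 B5.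
            \<alpha>*fst B1 + \<beta>*snd B1 = - c \<and> \<alpha>*fst B3 + \<beta>*snd B3 = c \<and> \<alpha>*fst B0 + \<beta>*snd B0 = 0 \<and>
            \<alpha>*fst B2 + \<beta>*snd B2 = - c \<and> \<alpha>*fst B4 + \<beta>*snd B4 = c \<and> \<alpha>*fst B5 + \<beta>*snd B5 = 0 \<and>
            kahan_sing (fvf \<alpha> \<beta> a1 a2 a3 a4 a5) = proj_pt B1 \<union> proj_pt B3 \<union> proj_pt B0 \<and>
            kahan_inv_sing (fvf \<alpha> \<beta> a1 a2 a3 a4 a5) = proj_pt B2 \<union> proj_pt B4 \<union> proj_pt B5 \<and>
            pencil_base (Cconic \<alpha> \<beta> a1 a2 a3 a4 a5) (Dconic \<alpha> \<beta> a1 a2 a3)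
              = proj_pt B1 \<union> proj_pt B2 \<union> proj_pt B3 \<union> proj_pt B4 \<and>
            B0 = midpt B2 B4 \<and> B5 = midpt B1 B3"
    if cc: "c^2 * gamma1 a1 a2 a3 = 1" for c
  proof -
    have cc': "(-c)^2 * gamma1 a1 a2 a3 = 1" using cc by simp
    have "Dl \<alpha> \<beta> a1 a2 a3 c * Dl \<alpha> \<beta> a1 a2 a3 (-c) =
      (\<alpha>*a3 - \<beta>*a2)^2 - \<beta>^2*gamma1 a1 a2 a3 * (c^2 * gamma1 a1 a2 a3)" unfolding Dl_def by algebra
    then have "Dl \<alpha> \<beta> a1 a2 a3 c * Dl \<alpha> \<beta> a1 a2 a3 (-c) \<noteq> 0" using cc dp by simp
    then have dc: "Dl \<alpha> \<beta> a1 a2 a3 c \<noteq> 0" and dmc: "Dl \<alpha> \<beta> a1 a2 a3 (-c) \<noteq> 0" by auto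
    have dc': "Dl (-\<alpha>) (-\<beta>) a1 a2 a3 c \<noteq> 0" and dmc': "Dl (-\<alpha>) (-\<beta>) a1 a2 a3 (-c) \<noteq> 0"
      using dc dmc Dneg by auto
    define B1 where "B1 = Qp \<alpha> \<beta> a1 a2 a3 a4 a5 (-c) (-c)"
    define B2 where "B2 = Qp \<alpha> \<beta> a1 a2 a3 a4 a5 (-c) c"
    define B3 where "B3 = Qp \<alpha> \<beta> a1 a2 a3 a4 a5 c c"
    define B4 where "B4 = Qp \<alpha> \<beta> a1 a2 a3 a4 a5 c (-c)"
    define B0 where "B0 = P0 \<alpha> \<beta> a1 a2 a3 a4 a5"
    define B5 where "B5 = P0 (-\<alpha>) (-\<beta>) a1 a2 a3 a4 a5"
    have q1: "\<alpha>*fst B1 + \<beta>*snd B1 = - c" "(a2 + (-c)*gamma1 a1 a2 a3)*fst B1 + a3*snd B1 + ee a2 a3 a4 a5 (-c) = 0"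
      using Q_prop[OF dmc] B1_def by auto
    have q2: "\<alpha>*fst B2 + \<beta>*snd B2 = - c" "(a2 + c*gamma1 a1 a2 a3)*fst B2 + a3*snd B2 + ee a2 a3 a4 a5 c = 0"
      using Q_prop[OF dc] B2_def by auto
    have q3: "\<alpha>*fst B3 + \<beta>*snd B3 = c" "(a2 + c*gamma1 a1 a2 a3)*fst B3 + a3*snd B3 + ee a2 a3 a4 a5 c = 0"
      using Q_prop[OF dc] B3_def by auto
    have q4: "\<alpha>*fst B4 + \<beta>*snd B4 = c" "(a2 + (-c)*gamma1 a1 a2 a3)*fst B4 + a3*snd B4 + ee a2 a3 a4 a5 (-c) = 0"
      using Q_prop[OF dmc] B4_def by auto
    have p0: "\<alpha>*fst B0 + \<beta>*snd B0 = 0" using P0_prop[OF d0] B0_def by auto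
    have p5: "\<alpha>*fst B5 + \<beta>*snd B5 = 0" using P0_prop(1)[OF d0', of a4 a5] unfolding B5_def by algebra
    define k where "k = (\<lambda>p. \<alpha>*(a2*fst p + a3*snd p + a5) - \<beta>*(a1*fst p + a2*snd p + a4))"
    define m where "m = \<alpha>*(a3*a4 - a2*a5) + \<beta>*(a1*a5 - a2*a4)"
    define g where "g = gamma1 a1 a2 a3"
    have k1: "g * ((-c) * k B1 + (-c)) = m" using lin_key[OF a3 cc' q1(2), of \<alpha> \<beta>] q1(1) unfolding k_def m_def g_def by simp
    have k2: "g * (c * k B2 + (-c)) = m" using lin_key[OF a3 cc q2(2), of \<alpha> \<beta>] q2(1) unfolding k_def m_def g_def by simp
    have k3: "g * (c * k B3 + c) = m" using lin_key[OF a3 cc q3(2), of \<alpha> \<beta>] q3(1) unfolding k_def m_def g_def by simp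
    have k4: "g * ((-c) * k B4 + c) = m" using lin_key[OF a3 cc' q4(2), of \<alpha> \<beta>] q4(1) unfolding k_def m_def g_def by simp
    have cn: "c \<noteq> 0" using cc by auto
    have gn: "g \<noteq> 0" using g1 g_def by simp
    have "g * c * (k B1 + k B3 + 2) = g * (c * k B3 + c) - g * ((-c) * k B1 + (-c))" by (simp add: algebra_simps)
    then have "g * c * (k B1 + k B3 + 2) = 0" using k1 k3 by simp
    then have "k B1 + k B3 + 2 = 0" using cn gn by simp
    then have k13: "k B1 + k B3 = -2" by (simp add: eq_neg_iff_add_eq_0)
    have "g * c * (k B2 + k B4 - 2) = g * (c * k B2 + (-c)) - g * ((-c) * k B4 + c)" by (simp add: algebra_simps)
    then have "g * c * (k B2 + k B4 - 2) = 0" using k2 k4 by simp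
    then have k24: "k B2 + k B4 = 2" using cn gn by simp
    have m1: "B5 = midpt B1 B3" unfolding B5_def
    proof (rule mid_gen[OF d0', symmetric])
      show "- \<alpha> * fst B1 + - \<beta> * snd B1 + (- \<alpha> * fst B3 + - \<beta> * snd B3) = 0" using q1(1) q3(1) by algebra
      show "- \<alpha> * (a2 * fst B1 + a3 * snd B1 + a5) - - \<beta> * (a1 * fst B1 + a2 * snd B1 + a4) +
        (- \<alpha> * (a2 * fst B3 + a3 * snd B3 + a5) - - \<beta> * (a1 * fst B3 + a2 * snd B3 + a4)) = 2"
        using k13 unfolding k_def by algebra
    qed
    have m2: "B0 = midpt B2 B4" unfolding B0_def
    proof (rule mid_gen[OF d0, symmetric])
      show "\<alpha> * fst B2 + \<beta> * snd B2 + (\<alpha> * fst B4 + \<beta> * snd B4) = 0" using q2(1) q4(1) by simp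
      show "\<alpha> * (a2 * fst B2 + a3 * snd B2 + a5) - \<beta> * (a1 * fst B2 + a2 * snd B2 + a4) +
        (\<alpha> * (a2 * fst B4 + a3 * snd B4 + a5) - \<beta> * (a1 * fst B4 + a2 * snd B4 + a4)) = 2"
        using k24 unfolding k_def by simp
    qed
    have s1: "kahan_sing (fvf \<alpha> \<beta> a1 a2 a3 a4 a5) = proj_pt B1 \<union> proj_pt B3 \<union> proj_pt B0"
      using sing_eq[OF g1 d0 a3 dc dmc cc, of a4 a5] unfolding B0_def B1_def B3_def by blast
    have s2: "kahan_inv_sing (fvf \<alpha> \<beta> a1 a2 a3 a4 a5) = proj_pt B2 \<union> proj_pt B4 \<union> proj_pt B5"
      using sing_eq[OF g1 d0' a3 dc' dmc' cc, of a4 a5]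
      unfolding kahan_inv_sing_def fvf_neg Q_neg B2_def B4_def B5_def by auto
    have s3: "pencil_base (Cconic \<alpha> \<beta> a1 a2 a3 a4 a5) (Dconic \<alpha> \<beta> a1 a2 a3)
              = proj_pt B1 \<union> proj_pt B2 \<union> proj_pt B3 \<union> proj_pt B4"
      using pen_eq[OF g1 d0 a3 dc dmc cc, of a4 a5] unfolding B1_def B2_def B3_def B4_def .
    show ?thesis
      by (rule exI[of _ B0], rule exI[of _ B1], rule exI[of _ B2], rule exI[of _ B3], rule exI[of _ B4],
          rule exI[of _ B5]) (intro conjI q1(1) q2(1) q3(1) q4(1) p0 p5 s1 s2 s3 m1 m2)
  qed
  show ?thesis unfolding Let_def ell_def lin_eval.simps using main by simp
qed


lemma pf_minus: "polyfun n p \<Longrightarrow> polyfun n q \<Longrightarrow> polyfun n (\<lambda>v. p v - q v)"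
proof -
  assume "polyfun n p" "polyfun n q"
  then have "polyfun n (\<lambda>v. p v + (\<lambda>v. -1) v * q v)" by (intro pf_add pf_mult pf_const)
  then show ?thesis by simp
qed

lemma pf_pow: "polyfun n p \<Longrightarrow> polyfun n (\<lambda>v. p v ^ k)"
proof (induction k)
  case 0 then show ?case using pf_const[of n 1] by simp
next
  case (Suc k)
  then have "polyfun n (\<lambda>v. p v * p v ^ k)" by (intro pf_mult) auto
  then show ?case by simp
qed

theorem theorem3:
  shows "holds_generically 7 (\<lambda>v.
    let \<alpha> = v 0; \<beta> = v 1; a1 = v 2; a2 = v 3; a3 = v 4; a4 = v 5; a5 = v 6;
        f = fvf \<alpha> \<beta> a1 a2 a3 a4 a5;
        L = (\<lambda>p. lin_eval (ell \<alpha> \<beta>) (fst p) (snd p))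
    in (\<alpha>, \<beta>) \<noteq> (0, 0) \<longrightarrow>
       conic_nonsingular (Cconic \<alpha> \<beta> a1 a2 a3 a4 a5) \<longrightarrow>
       (\<forall>c. c^2 * gamma1 a1 a2 a3 = 1 \<longrightarrow>
         (\<exists>B0 B1 B2 B3 B4 B5.
            L B1 = - c \<and> L B3 = c \<and> L B0 = 0 \<and>
            L B2 = - c \<and> L B4 = c \<and> L B5 = 0 \<and>
            kahan_sing f = proj_pt B1 \<union> proj_pt B3 \<union> proj_pt B0 \<and>
            kahan_inv_sing f = proj_pt B2 \<union> proj_pt B4 \<union> proj_pt B5 \<and>
            pencil_base (Cconic \<alpha> \<beta> a1 a2 a3 a4 a5) (Dconic \<alpha> \<beta> a1 a2 a3)
              = proj_pt B1 \<union> proj_pt B2 \<union> proj_pt B3 \<union> proj_pt B4 \<and>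
            B0 = midpt B2 B4 \<and> B5 = midpt B1 B3)))"
proof -
  define G where "G = (\<lambda>v::nat \<Rightarrow> complex. (v 3 ^ 2 - v 2 * v 4) *
      (v 0 ^ 2 * v 4 - 2 * v 0 * v 1 * v 3 + v 1 ^ 2 * v 2) * v 4 *
      ((v 0 * v 4 - v 1 * v 3) ^ 2 - v 1 ^ 2 * (v 3 ^ 2 - v 2 * v 4)))"
  have pf: "polyfun 7 G" unfolding G_def
    by (intro pf_mult pf_minus pf_add pf_pow pf_const pf_var; simp)
  have ex: "\<exists>v. G v \<noteq> 0"
  proof
    show "G (\<lambda>i. if i = 0 \<or> i = 3 \<or> i = 4 then 1 else 0) \<noteq> 0" unfolding G_def by simp
  qed
  have all: "G v \<noteq> 0 \<Longrightarrow> (let \<alpha> = v 0; \<beta> = v 1; a1 = v 2; a2 = v 3; a3 = v 4; a4 = v 5; a5 = v 6;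
        f = fvf \<alpha> \<beta> a1 a2 a3 a4 a5;
        L = (\<lambda>p. lin_eval (ell \<alpha> \<beta>) (fst p) (snd p))
    in (\<alpha>, \<beta>) \<noteq> (0, 0) \<longrightarrow>
       conic_nonsingular (Cconic \<alpha> \<beta> a1 a2 a3 a4 a5) \<longrightarrow>
       (\<forall>c. c^2 * gamma1 a1 a2 a3 = 1 \<longrightarrow>
         (\<exists>B0 B1 B2 B3 B4 B5.
            L B1 = - c \<and> L B3 = c \<and> L B0 = 0 \<and>
            L B2 = - c \<and> L B4 = c \<and> L B5 = 0 \<and>
            kahan_sing f = proj_pt B1 \<union> proj_pt B3 \<union> proj_pt B0 \<and>
            kahan_inv_sing f = proj_pt B2 \<union> proj_pt B4 \<union> proj_pt B5 \<and>
            pencil_base (Cconic \<alpha> \<beta> a1 a2 a3 a4 a5) (Dconic \<alpha> \<beta> a1 a2 a3)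
              = proj_pt B1 \<union> proj_pt B2 \<union> proj_pt B3 \<union> proj_pt B4 \<and>
            B0 = midpt B2 B4 \<and> B5 = midpt B1 B3)))" for v
  proof -
    assume "G v \<noteq> 0"
    then have "gamma1 (v 2) (v 3) (v 4) * D0 (v 0) (v 1) (v 2) (v 3) (v 4) * v 4 *
       ((v 0 * v 4 - v 1 * v 3)^2 - v 1^2 * gamma1 (v 2) (v 3) (v 4)) \<noteq> 0"
      unfolding G_def gamma1_def D0_def by (simp add: algebra_simps)
    from main[OF this, of "v 5" "v 6"] show ?thesis by (simp only: Let_def)
  qed
  show ?thesis unfolding holds_generically_def using pf ex all by blast
qed

end
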